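(* Let $b_n = \sum_{k=0}^n B_{n-k}^{(-k)}$ for $n\ge 0$. Then $b_0=1$ and for all $n\ge 0$, \[ 3b_{n+1} = 2b_n + \sum_{k=0}^n \binom{n+1}{k} b_k + 3. \]
   Context: For an integer $k$, $\mathrm{Li}_k(z)=\sum_{m\ge1} z^m/m^k$ (for $k\le 0$ this is a rational function of $z$). The poly-Bernoulli numbers $B_n^{(k)}\in\mathbb{Q}$ are defined by $\sum_{n\ge0} B_n^{(k)} \frac{t^n}{n!} = \frac{\mathrm{Li}_k(1-e^{-t})}{1-e^{-t}}$. *)

theory Defs
  imports "HOL-Computational_Algebra.Formal_Power_Series"
begin

text \<open>The formal power series Li_k(z)/z = sum_{m>=0} z^m/(m+1)^k (for any integer k).\<close>
definition Li_div_z :: "int \<Rightarrow> rat fps" where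
  "Li_div_z k = Abs_fps (\<lambda>m. inverse ((of_nat (m + 1) :: rat) powi k))"

text \<open>Poly-Bernoulli numbers: sum_n B_n^(k) t^n/n! = Li_k(1-e^{-t})/(1-e^{-t}),
  i.e. (Li_k(z)/z) composed with z = 1 - e^{-t} (which has zero constant term).\<close>
definition poly_bernoulli :: "int \<Rightarrow> nat \<Rightarrow> rat" where
  "poly_bernoulli k n = fact n * fps_nth (Li_div_z k oo (1 - fps_exp (-1))) n"

definition b_seq :: "nat \<Rightarrow> rat" where
  "b_seq n = (\<Sum>k=0..n. poly_bernoulli (- int k) (n - k))"

end

theory Submission imports Defs begin
notation fps_nth (infixl "!$" 75)


definition uu :: "rat fps" where "uu = 1 - fps_exp (-1)"
definition PP :: "nat \<Rightarrow> rat fps" where "PP m = Abs_fps (\<lambda>a. fact a * (uu^m !$ a))"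
definition QQ :: "nat \<Rightarrow> rat fps" where "QQ m = (\<Prod>i<m. 1 + of_nat i * fps_X)"

lemma inv_geom: "inverse (1 - of_nat c * fps_X :: rat fps) !$ n = of_nat c ^ n"
proof -
  have "(1 - of_nat c * fps_X :: rat fps) * Abs_fps (\<lambda>n. of_nat c ^ n) = 1"
    apply (auto simp: fps_eq_iff fps_of_nat algebra_simps fps_X_mult_nth)
    by (metis Suc_pred power_Suc)
  from fps_inverse_unique[OF this] show ?thesis by simp
qed

lemma uu0: "uu !$ 0 = 0" by (simp add: uu_def)
lemma uu_deriv: "fps_deriv uu = 1 - uu"
  by (simp add: uu_def fps_eq_iff)

lemma PP_0: "PP 0 = 1"
  by (auto simp: PP_def fps_eq_iff)

lemma PP_rec: "PP (Suc m) * (1 + of_nat (Suc m) * fps_X) = of_nat (Suc m) * fps_X * PP m"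
proof -
  have d: "(of_nat (Suc a) :: rat) * (uu ^ Suc m) !$ Suc a = of_nat (Suc m) * ((uu^m) !$ a - (uu ^ Suc m) !$ a)" for a
  proof -
    have "fps_deriv (uu ^ Suc m) = fps_const (of_nat (Suc m)) * (uu^m - uu ^ Suc m)"
    proof -
      have "fps_deriv (uu ^ Suc m) = fps_const (of_nat (Suc m)) * (1 - uu) * uu ^ m"
        by (simp only: fps_deriv_power uu_deriv diff_Suc_1)
      also have "\<dots> = fps_const (of_nat (Suc m)) * (uu^m - uu ^ Suc m)"
        by (simp add: algebra_simps)
      finally show ?thesis .
    qed
    hence "fps_deriv (uu ^ Suc m) !$ a = (fps_const (of_nat (Suc m)) * (uu^m - uu ^ Suc m)) !$ a" by simp
    thus ?thesis by (simp del: power_Suc of_nat_Suc add: algebra_simps)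
  qed
  have z: "(uu ^ Suc m) !$ 0 = 0" by (simp add: uu0)
  show ?thesis
  proof (subst fps_eq_iff, intro allI)
    fix n show "(PP (Suc m) * (1 + of_nat (Suc m) * fps_X)) !$ n = (of_nat (Suc m) * fps_X * PP m) !$ n"
    proof (cases n)
      case 0 then show ?thesis by (simp add: PP_def z uu0)
    next
      case (Suc a)
      have "fact (Suc a) * (uu ^ Suc m) !$ Suc a = fact a * ((of_nat (Suc a) :: rat) * (uu ^ Suc m) !$ Suc a)"
        by (simp add: algebra_simps)
      also have "\<dots> = of_nat (Suc m) * (fact a * (uu^m) !$ a) - of_nat (Suc m) * (fact a * (uu^Suc m) !$ a)"
        by (simp only: d) (simp add: algebra_simps)
      finally have e: "fact (Suc a) * (uu ^ Suc m) !$ Suc a = of_nat (Suc m) * (fact a * (uu^m) !$ a) - of_nat (Suc m) * (fact a * (uu^Suc m) !$ a)" .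
      show ?thesis using e unfolding Suc
        by (simp add: PP_def algebra_simps fps_X_mult_nth fps_of_nat)
    qed
  qed
qed


lemma QQ_Suc: "QQ (Suc m) = QQ m * (1 + of_nat m * fps_X)"
  by (simp add: QQ_def)

lemma QQ_0: "QQ m !$ 0 = 1"
proof (induction m)
  case 0 then show ?case by (simp add: QQ_def)
next
  case (Suc m) then show ?case by (simp only: QQ_Suc fps_mult_nth_0) simp
qed

lemma PP_Q: "PP m * QQ (Suc m) = fact m * fps_X ^ m"
proof (induction m)
  case 0 then show ?case by (simp add: PP_0 QQ_def)
next
  case (Suc m)
  have "PP (Suc m) * QQ (Suc (Suc m)) = (PP (Suc m) * (1 + of_nat (Suc m) * fps_X)) * QQ (Suc m)"
    by (simp only: QQ_Suc[of "Suc m"] mult_ac)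
  also have "\<dots> = of_nat (Suc m) * fps_X * (PP m * QQ (Suc m))"
    unfolding PP_rec by (simp only: mult_ac)
  also have "\<dots> = fact (Suc m) * fps_X ^ Suc m"
    by (simp only: Suc.IH fact_Suc power_Suc mult_ac)
  finally show ?case .
qed

lemma uu_ne: "uu \<noteq> 0"
proof
  assume "uu = 0" hence "uu !$ 1 = 0" by simp
  thus False by (simp add: uu_def)
qed

lemma PP_nth_zero: "a < m \<Longrightarrow> PP m !$ a = 0"
proof -
  assume "a < m"
  have "subdegree uu \<noteq> 0" using uu_ne uu0 by (simp add: subdegree_eq_0_iff)
  hence "m \<le> m * subdegree uu" by simp
  hence "a < m * subdegree uu" using \<open>a < m\<close> by linarith
  thus ?thesis by (simp add: PP_def fps_pow_nth_below_subdegree)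
qed

definition AA :: "nat \<Rightarrow> rat fps" where
  "AA m = PP m * inverse (1 - of_nat (Suc m) * fps_X)"

lemma AA_eq: "AA m * ((1 - of_nat (Suc m) * fps_X) * QQ (Suc m)) = fact m * fps_X ^ m"
proof -
  have "AA m * ((1 - of_nat (Suc m) * fps_X) * QQ (Suc m))
     = PP m * QQ (Suc m) * (inverse (1 - of_nat (Suc m) * fps_X) * (1 - of_nat (Suc m) * fps_X))"
    by (simp only: AA_def mult_ac)
  also have "inverse (1 - of_nat (Suc m) * fps_X) * (1 - of_nat (Suc m) * fps_X :: rat fps) = 1"
    by (rule inverse_mult_eq_1) simp
  finally show ?thesis by (simp add: PP_Q)
qed

lemma AA_nth: "AA m !$ n = (\<Sum>a=0..n. PP m !$ a * of_nat (Suc m) ^ (n - a))"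
  unfolding AA_def fps_mult_nth inv_geom[of "Suc m"] ..

lemma AA_nth_zero: "n < m \<Longrightarrow> AA m !$ n = 0"
  unfolding AA_nth by (intro sum.neutral ballI) (simp add: PP_nth_zero)

definition YY :: "rat fps" where "YY = fps_X * inverse (1 - fps_X)"
definition TT :: "rat fps \<Rightarrow> rat fps" where "TT F = (F oo YY) * inverse (1 - fps_X)"

lemma YY0: "YY !$ 0 = 0" by (simp add: YY_def)

lemma inv1: "inverse (1 - fps_X :: rat fps) !$ n = 1"
  using inv_geom[of 1 n] by simp

lemma W_pow: "(inverse (1 - fps_X :: rat fps) ^ Suc i) !$ n = of_nat ((i + n) choose n)"
proof (induction i arbitrary: n)
  case 0 then show ?case by (simp add: inv1)
next
  case (Suc i)
  have "(inverse (1 - fps_X :: rat fps) ^ Suc (Suc i)) !$ n = (\<Sum>j\<le>n. of_nat ((i + j) choose j))"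
    by (simp only: power_Suc2[of _ "Suc i"] fps_mult_nth inv1 Suc.IH mult_1_right atLeast0AtMost)
  also have "\<dots> = of_nat (Suc (i + n) choose n)"
    by (simp only: of_nat_sum[symmetric] sum_choose_lower)
  finally show ?case by simp
qed

lemma W_X: "(fps_X ^ i * inverse (1 - fps_X :: rat fps) ^ Suc i) !$ n = of_nat (n choose i)"
proof (cases "i \<le> n")
  case True
  then have "(fps_X ^ i * inverse (1 - fps_X :: rat fps) ^ Suc i) !$ n = of_nat ((i + (n - i)) choose (n - i))"
    by (simp add: fps_X_power_mult_nth W_pow del: power_Suc)
  also have "\<dots> = of_nat (n choose i)" using True
    by (simp add: binomial_symmetric[of i n])
  finally show ?thesis .
next
  case False then show ?thesis by (simp add: fps_X_power_mult_nth)
qed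


lemma YY_pow: "YY ^ i * inverse (1 - fps_X) = fps_X ^ i * inverse (1 - fps_X :: rat fps) ^ Suc i"
  by (simp add: YY_def power_mult_distrib mult_ac)

lemma TT_nth: "TT F !$ n = (\<Sum>i=0..n. of_nat (n choose i) * F !$ i)"
proof -
  define Fn where "Fn = (\<Sum>i=0..n. fps_const (F !$ i) * fps_X ^ i)"
  have Fn_nth: "Fn !$ i = F !$ i" if "i \<le> n" for i
  proof -
    have "Fn !$ i = (\<Sum>k=0..n. if i = k then F !$ k else 0)"
      unfolding Fn_def fps_sum_nth by (rule sum.cong) auto
    also have "\<dots> = F !$ i" using that by (simp add: sum.delta)
    finally show ?thesis .
  qed
  have c1: "(F oo YY) !$ j = (Fn oo YY) !$ j" if "j \<le> n" for j
    unfolding fps_compose_nth by (rule sum.cong) (use that in \<open>auto simp: Fn_nth\<close>)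
  have e1: "TT F !$ n = TT Fn !$ n"
    unfolding TT_def fps_mult_nth by (rule sum.cong) (auto simp: c1)
  have e2: "Fn oo YY = (\<Sum>i=0..n. fps_const (F !$ i) * YY ^ i)"
    unfolding Fn_def fps_compose_sum_distrib
  proof (rule sum.cong)
    fix i
    have "(fps_const (F !$ i) * fps_X ^ i) oo YY = fps_const (F !$ i) * (fps_X ^ i oo YY)"
      by (simp only: fps_const_mult_apply_left)
    also have "fps_X ^ i oo YY = (fps_X oo YY) ^ i"
      by (simp only: fps_compose_power[OF YY0])
    also have "fps_X oo YY = YY" by (simp add: YY0)
    finally show "(fps_const (F !$ i) * fps_X ^ i) oo YY = fps_const (F !$ i) * YY ^ i" .
  qed simp
  have "TT Fn = (\<Sum>i=0..n. fps_const (F !$ i) * (fps_X ^ i * inverse (1 - fps_X :: rat fps) ^ Suc i))"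
    unfolding TT_def e2 sum_distrib_right
    by (rule sum.cong) (simp_all only: mult.assoc YY_pow)
  hence "TT Fn !$ n = (\<Sum>i=0..n. F !$ i * of_nat (n choose i))"
    by (simp only: fps_sum_nth fps_mult_left_const_nth W_X)
  with e1 show ?thesis by (simp add: mult_ac)
qed


lemma fps_const_mult_eq: "fps_const (c::rat) * f = Abs_fps (\<lambda>n. c * f !$ n)"
  by (simp add: fps_eq_iff)

lemma omX_YY: "(1 - fps_X) * YY = (fps_X :: rat fps)"
proof -
  have "(1 - fps_X) * YY = fps_X * ((1 - fps_X) * inverse (1 - fps_X :: rat fps))"
    by (simp only: YY_def mult_ac)
  also have "(1 - fps_X) * inverse (1 - fps_X :: rat fps) = 1"
    by (rule inverse_mult_eq_1') simp
  finally show ?thesis by simp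
qed

lemma lin_YY: "(1 - fps_X) * ((1 + fps_const c * fps_X) oo YY) = 1 + fps_const (c - 1) * (fps_X :: rat fps)"
proof -
  have "(1 + fps_const c * fps_X) oo YY = 1 + fps_const c * YY"
    by (simp add: fps_compose_add_distrib fps_const_mult_apply_left[symmetric] YY0)
  hence "(1 - fps_X) * ((1 + fps_const c * fps_X) oo YY) = (1 - fps_X) + fps_const c * ((1 - fps_X) * YY)"
    by (simp add: algebra_simps)
  also have "\<dots> = 1 + fps_const (c - 1) * fps_X"
    by (simp only: omX_YY) (simp add: algebra_simps fps_const_sub[symmetric] del: fps_const_sub)
  finally show ?thesis .
qed

lemma of_nat_compose: "(of_nat k :: rat fps) oo b = of_nat k"
  by (simp only: fps_of_nat[symmetric] fps_const_compose)

lemma fact_compose: "(fact k :: rat fps) oo b = fact k"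
  using of_nat_compose[of "fact k" b] by (simp only: of_nat_fact)

lemma QQ_YY: "(1 - fps_X) ^ Suc m * (QQ (Suc m) oo YY) = (1 - fps_X) * QQ m"
proof -
  have q: "QQ k = (\<Prod>i<k. 1 + fps_const (of_nat i) * fps_X)" for k
    by (simp add: QQ_def fps_of_nat)
  have "(1 - fps_X) ^ Suc m * (QQ (Suc m) oo YY) = (\<Prod>i<Suc m. (1 - fps_X) * ((1 + fps_const (of_nat i) * fps_X) oo YY))"
    by (simp only: q fps_compose_prod_distrib[OF YY0] prod.distrib prod_constant card_lessThan)
  also have "\<dots> = (\<Prod>i<Suc m. 1 + fps_const (of_nat i - 1) * fps_X)"
    by (simp only: lin_YY)
  also have "\<dots> = (1 + fps_const (of_nat 0 - 1) * fps_X) * (\<Prod>i<m. 1 + fps_const (of_nat (Suc i) - 1) * fps_X)"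
    by (simp only: prod.lessThan_Suc_shift)
  also have "(1 + fps_const (of_nat 0 - 1) * fps_X :: rat fps) = 1 - fps_X"
    by (simp add: fps_eq_iff)
  also have "(\<Prod>i<m. 1 + fps_const (of_nat (Suc i) - 1) * fps_X) = QQ m"
    by (simp add: q)
  finally show ?thesis .
qed

lemma TT_eq: "TT (AA m) * ((1 - of_nat (Suc (Suc m)) * fps_X) * QQ m) = fact m * fps_X ^ m"
proof -
  have c0: "(AA m oo YY) * ((1 - of_nat (Suc m) * fps_X) oo YY) * (QQ (Suc m) oo YY) = fact m * YY ^ m"
    using arg_cong[OF AA_eq, of "\<lambda>f. f oo YY"]
    by (simp only: fps_compose_mult_distrib[OF YY0] fact_compose fps_compose_power[OF YY0, symmetric]
         fps_X_fps_compose_startby0[OF YY0] mult.assoc)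
  have l1: "(1 - fps_X) * ((1 - of_nat (Suc m) * fps_X) oo YY) = 1 - of_nat (Suc (Suc m)) * (fps_X :: rat fps)"
  proof -
    have "(1 - of_nat (Suc m) * fps_X :: rat fps) = 1 + fps_const (- of_nat (Suc m)) * fps_X"
      by (simp only: fps_const_neg[symmetric] fps_of_nat) (simp add: algebra_simps)
    hence "(1 - fps_X) * ((1 - of_nat (Suc m) * fps_X) oo YY) = 1 + fps_const (- of_nat (Suc m) - 1) * (fps_X :: rat fps)"
      by (simp only: lin_YY)
    also have "fps_const (- of_nat (Suc m) - 1 :: rat) = - of_nat (Suc (Suc m))"
      by (simp only: fps_of_nat[symmetric] fps_const_neg) simp
    finally show ?thesis by (simp add: algebra_simps)
  qed
  have a1: "AA m oo YY = TT (AA m) * (1 - fps_X)"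
  proof -
    have "TT (AA m) * (1 - fps_X) = (AA m oo YY) * (inverse (1 - fps_X) * (1 - fps_X :: rat fps))"
      by (simp only: TT_def mult.assoc)
    also have "inverse (1 - fps_X) * (1 - fps_X :: rat fps) = 1"
      by (rule inverse_mult_eq_1) simp
    finally show ?thesis by simp
  qed
  have y1: "YY ^ m * (1 - fps_X) ^ m = fps_X ^ m"
    by (simp only: power_mult_distrib[symmetric] mult.commute[of YY] omX_YY)
  have "(TT (AA m) * ((1 - of_nat (Suc (Suc m)) * fps_X) * QQ m)) * (1 - fps_X) ^ 2
      = (AA m oo YY) * ((1 - fps_X) * ((1 - of_nat (Suc m) * fps_X) oo YY)) * ((1 - fps_X) ^ Suc m * (QQ (Suc m) oo YY))"
    unfolding a1 l1 QQ_YY by (simp only: power2_eq_square mult_ac)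
  also have "\<dots> = ((AA m oo YY) * ((1 - of_nat (Suc m) * fps_X) oo YY) * (QQ (Suc m) oo YY)) * (1 - fps_X) * (1 - fps_X) ^ Suc m"
    by (simp only: mult_ac)
  also have "\<dots> = (fact m * fps_X ^ m) * (1 - fps_X) ^ 2"
    unfolding c0 y1[symmetric] by (simp only: mult_ac power_Suc power2_eq_square)
  finally have "(TT (AA m) * ((1 - of_nat (Suc (Suc m)) * fps_X) * QQ m)) * (1 - fps_X) ^ 2
      = (fact m * fps_X ^ m) * (1 - fps_X :: rat fps) ^ 2" .
  moreover have nz: "(1 - fps_X :: rat fps) ^ 2 \<noteq> 0"
  proof
    assume "(1 - fps_X :: rat fps) ^ 2 = 0"
    hence "((1 - fps_X :: rat fps) ^ 2) !$ 0 = 0" by simp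
    thus False by (simp add: power2_eq_square)
  qed
  ultimately show ?thesis using mult_right_cancel[OF nz] by blast
qed


definition RR :: "nat \<Rightarrow> rat fps" where
  "RR M = fact M * fps_X ^ M * (3 - (of_nat M + 3) * fps_X) *
     inverse ((1 - fps_X) * (1 - of_nat (Suc M) * fps_X) * QQ M)"

lemma RR_eq: "RR M * ((1 - fps_X) * (1 - of_nat (Suc M) * fps_X) * QQ M) = fact M * fps_X ^ M * (3 - (of_nat M + 3) * fps_X)"
proof -
  have "inverse ((1 - fps_X) * (1 - of_nat (Suc M) * fps_X) * QQ M) * ((1 - fps_X) * (1 - of_nat (Suc M) * fps_X) * QQ M) = 1"
    by (rule inverse_mult_eq_1) (simp add: QQ_0)
  then show ?thesis unfolding RR_def by (simp only: mult.assoc) simp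
qed

lemma poly_id:
  fixes x c f p :: "'a::comm_ring_1"
  shows "f*p*(3-(c+3)*x)*((1-(c+2)*x)*(1+c*x)) - (c+1)*f*(p*x)*(3-(c+4)*x)*(1-(c+1)*x)
     = (4*(f*p*((1-x)*(1-(c+2)*x))) - 2*(x*(f*p*((1-x)*(1-(c+2)*x))))) - f*p*((1-x)*(1-(c+1)*x)*(1+c*x))"
  by (simp add: algebra_simps)

lemma tele: "RR M - RR (Suc M) = fps_const 4 * AA M - fps_const 2 * (fps_X * AA M) - TT (AA M)"
proof -
  define c :: "rat fps" where "c = of_nat M"
  define L where "L = (1 - fps_X) * (1 - of_nat (Suc M) * fps_X) * (1 - of_nat (Suc (Suc M)) * fps_X) * QQ M * (1 + of_nat M * fps_X)"
  have L0: "L !$ 0 = 1" by (simp add: L_def QQ_0)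
  hence Lnz: "L \<noteq> 0" by auto
  have s1: "of_nat (Suc M) = c + 1" "of_nat (Suc (Suc M)) = (c + 2 :: rat fps)" by (simp_all add: c_def)
  have e1: "RR M * L = fact M * fps_X ^ M * (3 - (c + 3) * fps_X) * ((1 - (c+2) * fps_X) * (1 + c * fps_X))"
  proof -
    have "RR M * L = (RR M * ((1 - fps_X) * (1 - of_nat (Suc M) * fps_X) * QQ M)) * ((1 - of_nat (Suc (Suc M)) * fps_X) * (1 + of_nat M * fps_X))"
      by (simp only: L_def mult_ac)
    thus ?thesis by (simp only: RR_eq) (simp only: s1 c_def)
  qed
  have e2: "RR (Suc M) * L = (c + 1) * fact M * (fps_X ^ M * fps_X) * (3 - (c + 4) * fps_X) * (1 - (c+1) * fps_X)"
  proof -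
    have "RR (Suc M) * L = (RR (Suc M) * ((1 - fps_X) * (1 - of_nat (Suc (Suc M)) * fps_X) * QQ (Suc M))) * (1 - of_nat (Suc M) * fps_X)"
      by (simp only: L_def QQ_Suc mult_ac)
    also have "\<dots> = fact (Suc M) * fps_X ^ Suc M * (3 - (of_nat (Suc M) + 3) * fps_X) * (1 - of_nat (Suc M) * fps_X)"
      by (simp only: RR_eq)
    also have "\<dots> = (c + 1) * fact M * (fps_X ^ M * fps_X) * (3 - (c + 4) * fps_X) * (1 - (c+1) * fps_X)"
      by (simp add: s1 fact_Suc power_Suc2 algebra_simps c_def)
    finally show ?thesis .
  qed
  have e3: "AA M * L = fact M * fps_X ^ M * ((1 - fps_X) * (1 - (c+2) * fps_X))"
  proof -
    have "AA M * L = (AA M * ((1 - of_nat (Suc M) * fps_X) * QQ (Suc M))) * ((1 - fps_X) * (1 - of_nat (Suc (Suc M)) * fps_X))"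
      by (simp only: L_def QQ_Suc mult_ac)
    thus ?thesis by (simp only: AA_eq) (simp only: s1 c_def)
  qed
  have e4: "TT (AA M) * L = fact M * fps_X ^ M * ((1 - fps_X) * (1 - (c+1) * fps_X) * (1 + c * fps_X))"
  proof -
    have "TT (AA M) * L = (TT (AA M) * ((1 - of_nat (Suc (Suc M)) * fps_X) * QQ M)) * ((1 - fps_X) * (1 - of_nat (Suc M) * fps_X) * (1 + of_nat M * fps_X))"
      by (simp only: L_def mult_ac)
    thus ?thesis by (simp only: TT_eq) (simp only: s1 c_def)
  qed
  have "(RR M - RR (Suc M)) * L = (fps_const 4 * AA M - fps_const 2 * (fps_X * AA M) - TT (AA M)) * L"
  proof -
    have "(RR M - RR (Suc M)) * L = RR M * L - RR (Suc M) * L" by (simp only: left_diff_distrib)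
    also have "\<dots> = (4 * (AA M * L) - 2 * (fps_X * (AA M * L))) - TT (AA M) * L"
      unfolding e1 e2 e3 e4 by (rule poly_id)
    also have "\<dots> = (fps_const 4 * AA M - fps_const 2 * (fps_X * AA M) - TT (AA M)) * L"
      by (simp add: algebra_simps numeral_fps_const[symmetric])
    finally show ?thesis .
  qed
  with Lnz show ?thesis by simp
qed


lemma pb: "poly_bernoulli (- int k) a = (\<Sum>i=0..a. of_nat (Suc i) ^ k * PP i !$ a)"
  unfolding poly_bernoulli_def fps_compose_nth sum_distrib_left uu_def[symmetric]
  by (rule sum.cong) (simp_all add: Li_div_z_def PP_def power_int_minus mult_ac)

lemma b_AA: "n \<le> N \<Longrightarrow> b_seq n = (\<Sum>m=0..N. AA m !$ n)"
proof -
  assume nN: "n \<le> N"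
  have "b_seq n = (\<Sum>k=0..n. \<Sum>i=0..n-k. of_nat (Suc i) ^ k * PP i !$ (n - k))"
    unfolding b_seq_def pb ..
  also have "\<dots> = (\<Sum>a=0..n. \<Sum>i=0..n-(n-a). of_nat (Suc i) ^ (n - a) * PP i !$ (n - (n - a)))"
    by (subst sum.atLeastAtMost_rev) simp
  also have "\<dots> = (\<Sum>a=0..n. \<Sum>i=0..a. of_nat (Suc i) ^ (n - a) * PP i !$ a)"
    by (rule sum.cong) auto
  also have "\<dots> = (\<Sum>a=0..n. \<Sum>i=0..N. of_nat (Suc i) ^ (n - a) * PP i !$ a)"
  proof (rule sum.cong)
    fix a assume "a \<in> {0..n}"
    hence "a \<le> N" using nN by simp
    show "(\<Sum>i=0..a. of_nat (Suc i) ^ (n - a) * PP i !$ a) = (\<Sum>i=0..N. of_nat (Suc i) ^ (n - a) * PP i !$ a)"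
      by (rule sum.mono_neutral_left) (use \<open>a \<le> N\<close> in \<open>auto simp: PP_nth_zero\<close>)
  qed simp
  also have "\<dots> = (\<Sum>i=0..N. \<Sum>a=0..n. PP i !$ a * of_nat (Suc i) ^ (n - a))"
    by (subst sum.swap) (simp add: mult_ac)
  also have "\<dots> = (\<Sum>m=0..N. AA m !$ n)"
    by (simp only: AA_nth)
  finally show ?thesis .
qed

lemma tele_sum: "(\<Sum>i=0..K. RR i - RR (Suc i)) = RR 0 - RR (Suc K)"
  by (induction K) (simp_all add: algebra_simps)

lemma RR0: "RR 0 !$ k = 3"
proof -
  have "RR 0 * ((1 - fps_X) * (1 - fps_X)) = 3 * (1 - fps_X)"
    using RR_eq[of 0] by (simp add: QQ_def algebra_simps)
  hence "(RR 0 * (1 - fps_X)) * (1 - fps_X) = 3 * (1 - fps_X)" by (simp only: mult.assoc)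
  moreover have "(1 - fps_X :: rat fps) \<noteq> 0"
  proof
    assume "(1 - fps_X :: rat fps) = 0" hence "(1 - fps_X :: rat fps) !$ 0 = 0" by simp
    thus False by simp
  qed
  ultimately have h: "RR 0 * (1 - fps_X) = 3" using mult_right_cancel by blast
  have "RR 0 = RR 0 * ((1 - fps_X) * inverse (1 - fps_X))"
    by (subst inverse_mult_eq_1') simp_all
  also have "\<dots> = 3 * inverse (1 - fps_X)" by (simp only: mult.assoc[symmetric] h)
  finally have "RR 0 = 3 * inverse (1 - fps_X)" .
  thus ?thesis by (simp add: numeral_fps_const inv1)
qed

lemma RR_zero: "k < M \<Longrightarrow> RR M !$ k = 0"
proof -
  assume "k < M"
  have "RR M = fps_X ^ M * (fact M * (3 - (of_nat M + 3) * fps_X) *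
     inverse ((1 - fps_X) * (1 - of_nat (Suc M) * fps_X) * QQ M))"
    by (simp only: RR_def mult_ac)
  thus ?thesis using \<open>k < M\<close> by (simp add: fps_X_power_mult_nth)
qed

theorem proposition3p1:
  shows "b_seq 0 = 1 \<and>
    (\<forall>n. 3 * b_seq (n + 1) = 2 * b_seq n + (\<Sum>k=0..n. of_nat ((n + 1) choose k) * b_seq k) + 3)"
proof
  show "b_seq 0 = 1"
    using b_AA[of 0 0] by (simp add: AA_nth PP_0)
next
  show "\<forall>n. 3 * b_seq (n + 1) = 2 * b_seq n + (\<Sum>k=0..n. of_nat ((n + 1) choose k) * b_seq k) + 3"
  proof
    fix n
    let ?K = "Suc n"
    have "(\<Sum>m=0..?K. RR m - RR (Suc m)) !$ Suc n = 3"
      by (simp add: tele_sum RR0 RR_zero)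
    hence "(\<Sum>m=0..?K. fps_const 4 * AA m - fps_const 2 * (fps_X * AA m) - TT (AA m)) !$ Suc n = 3"
      by (simp only: tele)
    hence "(\<Sum>m=0..?K. 4 * AA m !$ Suc n - 2 * AA m !$ n - TT (AA m) !$ Suc n) = 3"
      by (simp add: fps_sum_nth fps_X_mult_nth)
    hence "4 * (\<Sum>m=0..?K. AA m !$ Suc n) - 2 * (\<Sum>m=0..?K. AA m !$ n) - (\<Sum>m=0..?K. TT (AA m) !$ Suc n) = 3"
      by (simp add: sum_subtractf sum_distrib_left)
    moreover have "(\<Sum>m=0..?K. AA m !$ Suc n) = b_seq (Suc n)" by (rule b_AA[symmetric]) simp
    moreover have "(\<Sum>m=0..?K. AA m !$ n) = b_seq n" by (rule b_AA[symmetric]) simp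
    moreover have "(\<Sum>m=0..?K. TT (AA m) !$ Suc n) = (\<Sum>k=0..Suc n. of_nat (Suc n choose k) * b_seq k)"
    proof -
      have "(\<Sum>m=0..?K. TT (AA m) !$ Suc n) = (\<Sum>m=0..?K. \<Sum>k=0..Suc n. of_nat (Suc n choose k) * AA m !$ k)"
        by (simp only: TT_nth)
      also have "\<dots> = (\<Sum>k=0..Suc n. of_nat (Suc n choose k) * (\<Sum>m=0..?K. AA m !$ k))"
        by (subst sum.swap) (simp only: sum_distrib_left)
      also have "\<dots> = (\<Sum>k=0..Suc n. of_nat (Suc n choose k) * b_seq k)"
        by (rule sum.cong) (simp_all add: b_AA)
      finally show ?thesis .
    qed
    ultimately have "4 * b_seq (Suc n) - 2 * b_seq n - (\<Sum>k=0..Suc n. of_nat (Suc n choose k) * b_seq k) = 3"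
      by simp
    hence "4 * b_seq (Suc n) - 2 * b_seq n - ((\<Sum>k=0..n. of_nat (Suc n choose k) * b_seq k) + b_seq (Suc n)) = 3"
      by (simp add: sum.atLeast0_atMost_Suc)
    thus "3 * b_seq (n + 1) = 2 * b_seq n + (\<Sum>k=0..n. of_nat ((n + 1) choose k) * b_seq k) + 3"
      by simp
  qed
qed

end
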